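(* Let $m>1$ be an odd integer and let $p$ be the greatest prime dividing $m$. Then for every $\epsilon>0$, $$C_m(a)=o\!\left(a^{\log_p\left(\frac{p+1}{2}\right)+\epsilon}\right)\quad (a\to\infty).$$
   Context: For odd $m\in\mathbb{N}$, $C_m(a)=\#\{0\le s<a : m\nmid \binom{2^{s+1}}{2^s}\}$. *)

theory Defs
  imports Complex_Main "HOL-Computational_Algebra.Primes" "HOL-Library.Landau_Symbols"
begin

definition C :: "nat \<Rightarrow> nat \<Rightarrow> nat" where
  "C m a = card {s. s < a \<and> \<not> m dvd ((2 ^ (s + 1)) choose (2 ^ s))}"

end

theory Submission
  imports Defs "HOL-Number_Theory.Number_Theory" "HOL-Real_Asymp.Real_Asymp"
begin


lemma mult_card:
  assumes "prime (q::nat)" "x > 0"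
  shows "multiplicity q x = card {i\<in>{1..x}. q^i dvd x}"
proof -
  have le: "multiplicity q x \<le> x"
  proof -
    have "q ^ multiplicity q x dvd x" by (rule multiplicity_dvd)
    hence "q ^ multiplicity q x \<le> x" using assms(2) by (rule dvd_imp_le)
    moreover have "multiplicity q x < 2 ^ multiplicity q x" by (rule less_exp)
    moreover have "2 ^ multiplicity q x \<le> q ^ multiplicity q x"
      using prime_ge_2_nat[OF assms(1)] by (intro power_mono) auto
    ultimately show ?thesis by linarith
  qed
  have "{i\<in>{1..x}. q^i dvd x} = {1..multiplicity q x}"
  proof -
    have nu: "\<not> is_unit q" by (metis assms(1) not_prime_unit)
    have iff: "\<And>i. q^i dvd x \<longleftrightarrow> i \<le> multiplicity q x"
      using power_dvd_iff_le_multiplicity[OF _ nu, of x] assms(2) by simp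
    show ?thesis
      unfolding set_eq_iff
    proof (intro allI)
      fix i
      have "i \<in> {i\<in>{1..x}. q^i dvd x} \<longleftrightarrow> 1 \<le> i \<and> i \<le> x \<and> i \<le> multiplicity q x"
        by (simp only: iff[of i] mem_Collect_eq atLeastAtMost_iff conj_assoc)
      thus "i \<in> {i\<in>{1..x}. q^i dvd x} \<longleftrightarrow> i \<in> {1..multiplicity q x}"
        using le by auto
    qed
  qed
  thus ?thesis by simp
qed

lemma legendre:
  assumes "prime (q::nat)"
  shows "multiplicity q (fact n) = (\<Sum>i\<in>{1..n}. n div q^i)"
proof (induction n)
  case 0
  then show ?case by simp
next
  case (Suc n)
  have q2: "q \<ge> 2" using prime_ge_2_nat[OF assms] .
  have "multiplicity q (fact (Suc n) :: nat) = multiplicity q (Suc n * fact n)"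
    by (simp only: fact_Suc of_nat_id)
  also have "\<dots> = multiplicity q (Suc n) + multiplicity q (fact n :: nat)"
    using assms by (intro prime_elem_multiplicity_mult_distrib) auto
  also have "multiplicity q (Suc n) = card {i\<in>{1..Suc n}. q^i dvd Suc n}"
    using mult_card[OF assms] by simp
  also have "\<dots> = (\<Sum>i\<in>{1..Suc n}. if q^i dvd Suc n then 1 else 0)"
    by (subst sum.inter_filter[symmetric]) auto
  finally have 1: "multiplicity q (fact (Suc n) :: nat) =
     (\<Sum>i\<in>{1..Suc n}. if q^i dvd Suc n then 1 else 0) + (\<Sum>i\<in>{1..n}. n div q^i)"
    using Suc by simp
  have "n < q ^ Suc n"
  proof -
    have "n < 2 ^ Suc n" using less_exp[of "Suc n"] by simp
    also have "\<dots> \<le> q ^ Suc n" using q2 by (rule power_mono) simp_all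
    finally show ?thesis .
  qed
  hence "(\<Sum>i\<in>{1..Suc n}. n div q^i) = (\<Sum>i\<in>{1..n}. n div q^i)"
    by (simp add: sum.cl_ivl_Suc)
  moreover have "(\<Sum>i\<in>{1..Suc n}. Suc n div q^i) =
      (\<Sum>i\<in>{1..Suc n}. n div q^i) + (\<Sum>i\<in>{1..Suc n}. if q^i dvd Suc n then 1 else 0)"
    by (subst sum.distrib[symmetric], rule sum.cong) (auto simp: div_Suc dvd_eq_mod_eq_0)
  ultimately show ?case using 1 by simp
qed

lemma div2_split:
  assumes "(d::nat) > 0"
  shows "(2*n) div d = 2*(n div d) + (if d \<le> 2*(n mod d) then 1 else 0)"
proof -
  have e: "2*n = 2*(n mod d) + (2*(n div d)) * d"
  proof -
    have "n div d * d + n mod d = n" by (rule div_mult_mod_eq)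
    moreover have "2*(n div d)*d = 2*(n div d * d)" by simp
    ultimately show ?thesis by linarith
  qed
  have "(2*n) div d = 2*(n div d) + (2*(n mod d)) div d"
  proof -
    have "(2*(n mod d) + (2*(n div d))*d) div d = 2*(n div d) + 2*(n mod d) div d"
      using assms by simp
    thus ?thesis using e by simp
  qed
  moreover have "n mod d < d" using assms by simp
  hence "(2*(n mod d)) div d = (if d \<le> 2*(n mod d) then 1 else 0)"
    by (auto simp: div_eq_0_iff intro!: div_nat_eqI)
  ultimately show ?thesis by simp
qed

lemma pow_gt: "prime (q::nat) \<Longrightarrow> n < q ^ n"
proof -
  assume "prime q"
  hence "2 \<le> q" by (rule prime_ge_2_nat)
  have "n < 2 ^ n" by (rule less_exp)
  also have "(2::nat) ^ n \<le> q ^ n" using \<open>2 \<le> q\<close> by (rule power_mono) simp_all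
  finally show ?thesis .
qed

lemma binom_mult:
  assumes "prime (q::nat)"
  shows "multiplicity q ((2*n) choose n) = card {i\<in>{1..2*n}. q^i \<le> 2*(n mod q^i)}"
proof -
  have f: "fact n * fact n * ((2*n) choose n) = (fact (2*n) :: nat)"
    using binomial_fact_lemma[of n "2*n"] by simp
  have nz: "((2*n) choose n) \<noteq> 0" by simp
  have "multiplicity q (fact (2*n) :: nat) = multiplicity q (fact n * fact n * ((2*n) choose n) :: nat)"
    using f by simp
  also have "\<dots> = multiplicity q (fact n :: nat) + multiplicity q (fact n :: nat) + multiplicity q ((2*n) choose n)"
    using assms nz by (simp add: prime_elem_multiplicity_mult_distrib)
  finally have 1: "multiplicity q (fact (2*n) :: nat) = 2 * multiplicity q (fact n :: nat) + multiplicity q ((2*n) choose n)"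
    by simp
  have z: "(\<Sum>i\<in>{n+1..n+n}. n div q^i) = 0"
  proof (rule sum.neutral, intro ballI)
    fix i assume "i \<in> {n+1..n+n}"
    hence "n < i" by simp
    also have "i < q^i" using pow_gt[OF assms] .
    finally show "n div q^i = 0" by simp
  qed
  have "(\<Sum>i\<in>{1..n+n}. n div q^i) = (\<Sum>i\<in>{1..n}. n div q^i) + (\<Sum>i\<in>{n+1..n+n}. n div q^i)"
    by (rule sum.ub_add_nat) simp
  with z have 2: "multiplicity q (fact n :: nat) = (\<Sum>i\<in>{1..2*n}. n div q^i)"
    using legendre[OF assms, of n] by (simp add: mult_2)
  have 3: "(\<Sum>i\<in>{1..2*n}. (2*n) div q^i) = (\<Sum>i\<in>{1..2*n}. 2 * (n div q^i)) + (\<Sum>i\<in>{1..2*n}. if q^i \<le> 2*(n mod q^i) then 1 else 0)"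
    by (subst sum.distrib[symmetric], rule sum.cong) (use assms div2_split prime_gt_0_nat in auto)
  have 4: "(\<Sum>i\<in>{1..2*n}. if q^i \<le> 2*(n mod q^i) then 1 else 0) = card {i\<in>{1..2*n}. q^i \<le> 2*(n mod q^i)}"
    by (subst sum.inter_filter[symmetric]) auto
  show ?thesis using 1 2 3 4 legendre[OF assms, of "2*n"] by (simp add: sum_distrib_left[symmetric])
qed



lemma lift1:
  fixes u :: int
  assumes q: "prime (q::nat)" "odd q" and t: "t \<ge> 1" and u: "\<not> int q dvd u"
  shows "\<exists>u'. (1 + int q^t * u)^q = 1 + int q^(t+1) * u' \<and> \<not> int q dvd u'"
proof -
  define z where "z = int q^t * u"
  have q3: "q \<ge> 3" using q prime_ge_2_nat[OF q(1)] by presburger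
  have bin: "(z + 1)^q = (\<Sum>k\<le>q. of_nat (q choose k) * z^k * 1^(q-k))"
    by (rule binomial_ring)
  have split: "{..q} = {0,1} \<union> {2..q}" using q3 by auto
  have "(\<Sum>k\<le>q. of_nat (q choose k) * z^k * 1^(q-k)) =
        (\<Sum>k\<in>{0,1}. of_nat (q choose k) * z^k * 1^(q-k)) + (\<Sum>k\<in>{2..q}. of_nat (q choose k) * z^k * 1^(q-k))"
    by (subst split, rule sum.union_disjoint) auto
  also have "(\<Sum>k\<in>{0,1}. of_nat (q choose k) * z^k * 1^(q-k)) = 1 + int q * z"
    by simp
  finally have e1: "(z+1)^q = 1 + int q * z + (\<Sum>k\<in>{2..q}. of_nat (q choose k) * z^k * 1^(q-k))"
    using bin by simp
  have "int q^(t+2) dvd (\<Sum>k\<in>{2..q}. of_nat (q choose k) * z^k * 1^(q-k))"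
  proof (rule dvd_sum)
    fix k assume k: "k \<in> {2..q}"
    have zk: "z^k = int q^(t*k) * u^k" unfolding z_def by (simp add: power_mult_distrib power_mult)
    show "int q^(t+2) dvd of_nat (q choose k) * z^k * 1^(q-k)"
    proof (cases "k = q")
      case True
      have le: "t + 2 \<le> t * q" using t q3 mult_le_mono2[of 3 q t] by linarith
      have "int q^(t+2) dvd int q^(t*k)" using le_imp_power_dvd[OF le, of "int q"] True by simp
      thus ?thesis unfolding zk by simp
    next
      case False
      hence "k < q" "k \<noteq> 0" using k by auto
      hence "q dvd (q choose k)" using dvd_choose_prime[of k q] q by auto
      hence d1: "int q dvd of_nat (q choose k)" by (simp add: int_dvd_int_iff)
      have "t * 2 \<le> t * k" using k by (intro mult_le_mono2) auto
      hence "t + 1 \<le> t * k" using t by linarith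
      hence d2: "int q^(t+1) dvd int q^(t*k)" by (rule le_imp_power_dvd)
      have "int q * int q^(t+1) dvd of_nat (q choose k) * int q^(t*k)"
        using d1 d2 by (rule mult_dvd_mono)
      hence "int q^(t+2) dvd of_nat (q choose k) * int q^(t*k)" by (simp add: power_Suc)
      hence "int q^(t+2) dvd of_nat (q choose k) * int q^(t*k) * u^k" by (rule dvd_mult2)
      thus ?thesis unfolding zk by (simp add: mult.assoc)
    qed
  qed
  then obtain w where w: "(\<Sum>k\<in>{2..q}. of_nat (q choose k) * z^k * 1^(q-k)) = int q^(t+2) * w" by blast
  have "(1 + int q^t * u)^q = 1 + int q^(t+1) * (u + int q * w)"
    using e1 w unfolding z_def by (simp add: algebra_simps power_add)
  moreover have "\<not> int q dvd (u + int q * w)" using u by (simp add: dvd_add_left_iff)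
  ultimately show ?thesis by blast
qed

lemma liftn:
  fixes u :: int
  assumes q: "prime (q::nat)" "odd q" and t: "t \<ge> 1" and u: "\<not> int q dvd u"
  shows "\<exists>u'. (1 + int q^t * u)^(q^i) = 1 + int q^(t+i) * u' \<and> \<not> int q dvd u'"
proof (induction i)
  case 0
  then show ?case using u by auto
next
  case (Suc i)
  then obtain v where v: "(1 + int q^t * u)^(q^i) = 1 + int q^(t+i) * v" "\<not> int q dvd v" by blast
  have "(1 + int q^t * u)^(q^Suc i) = ((1 + int q^t * u)^(q^i))^q"
    by (simp add: power_mult[symmetric] mult.commute)
  also have "\<dots> = (1 + int q^(t+i) * v)^q" using v by simp
  finally show ?case using lift1[OF q _ v(2), of "t+i"] t by simp
qed

lemma nolift:
  fixes u :: int
  assumes q: "prime (q::nat)" and s: "s \<ge> 1" and u: "\<not> int q dvd u" and w: "\<not> q dvd w"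
  shows "\<not> int q^(s+1) dvd (1 + int q^s * u)^w - 1"
proof
  define x where "x = 1 + int q^s * u"
  assume a: "int q^(s+1) dvd (1 + int q^s * u)^w - 1"
  have "[x = 1] (mod int q)" unfolding x_def using s
    by (simp add: cong_iff_dvd_diff) 
  hence "[(\<Sum>i<w. x^i) = (\<Sum>i<w. 1)] (mod int q)"
    by (intro cong_sum) (metis cong_pow power_one)
  hence c: "[(\<Sum>i<w. x^i) = int w] (mod int q)" by simp
  have nS: "\<not> int q dvd (\<Sum>i<w. x^i)"
  proof
    assume "int q dvd (\<Sum>i<w. x^i)"
    hence "int q dvd int w" using c cong_dvd_iff by blast
    thus False using w by (simp add: int_dvd_int_iff)
  qed
  have "x^w - 1 = int q^s * (u * (\<Sum>i<w. x^i))"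
    using power_diff_1_eq[of x w] unfolding x_def by (simp add: algebra_simps)
  with a have "int q^s * int q dvd int q^s * (u * (\<Sum>i<w. x^i))" unfolding x_def by (simp add: power_add)
  hence "int q dvd u * (\<Sum>i<w. x^i)" using q by (subst (asm) dvd_mult_cancel_left) (auto)
  hence "int q dvd u \<or> int q dvd (\<Sum>i<w. x^i)" using q by (simp add: prime_dvd_mult_iff)
  thus False using u nS by blast
qed

lemma order_lb:
  assumes q: "prime (q::nat)" "odd q"
  obtains T where "\<And>K s s'. s < s' \<Longrightarrow> (2::nat)^s mod q^(K+T) = 2^s' mod q^(K+T) \<Longrightarrow> q^K \<le> s' - s"
proof -
  define y where "y = (2::int)^(q-1)"
  have q3: "q \<ge> 3" using q prime_ge_2_nat[OF q(1)] by presburger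
  have "\<not> q dvd 2" using q3 by (auto dest: dvd_imp_le)
  hence "[2^(q-1) = 1] (mod q)" using fermat_theorem[OF q(1)] by blast
  hence "[int (2^(q-1)) = int 1] (mod int q)" by (simp only: cong_int_iff)
  hence "int q dvd y - 1" unfolding y_def by (simp add: cong_iff_dvd_diff cong_sym_eq)
  have "y \<ge> 2^2" unfolding y_def using q3 by (intro power_increasing) auto
  hence ynz: "y - 1 \<noteq> 0" by simp
  obtain u where u: "y - 1 = int q ^ multiplicity (int q) (y-1) * u" "\<not> int q dvd u"
  proof (rule multiplicity_decompose'[OF ynz])
    show "\<not> is_unit (int q)"
    proof
      assume "is_unit (int q)"
      hence "int q \<le> 1" by (rule zdvd_imp_le) simp
      with q3 show False by simp
    qed
  qed
  define t where "t = multiplicity (int q) (y-1)"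
  have t1: "t \<ge> 1"
  proof (rule ccontr)
    assume "\<not> t \<ge> 1"
    hence "t = 0" by simp
    hence "y - 1 = u" using u(1) unfolding t_def by simp
    thus False using u(2) \<open>int q dvd y - 1\<close> by simp
  qed
  have yu: "y = 1 + int q^t * u" using u(1) unfolding t_def by simp
  have claim: "\<forall>e>0. int q^(K+t) dvd y^e - 1 \<longrightarrow> q^K dvd e" for K
  proof (induction K)
    case 0
    then show ?case by simp
  next
    case (Suc K)
    show ?case
    proof (intro allI impI)
      fix e :: nat assume e: "e > 0" and d: "int q^(Suc K + t) dvd y^e - 1"
      have "int q^(K+t) dvd int q^(Suc K + t)" by (rule le_imp_power_dvd) simp
      hence "int q^(K+t) dvd y^e - 1" using d by (rule dvd_trans)
      hence "q^K dvd e" using Suc e by blast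
      then obtain f where f: "e = q^K * f" by blast
      obtain v where v: "(1 + int q^t * u)^(q^K) = 1 + int q^(t+K) * v" "\<not> int q dvd v"
        using liftn[OF q t1 u(2), of K] by blast
      have "y^e = (1 + int q^(t+K) * v)^f" using v(1) unfolding yu f by (simp add: power_mult)
      have "q dvd f"
      proof (rule ccontr)
        assume nf: "\<not> q dvd f"
        have "\<not> int q^(t+K+1) dvd (1 + int q^(t+K) * v)^f - 1"
          using nolift[OF q(1) _ v(2) nf, of "t+K"] t1 by simp
        moreover have "t + K + 1 = Suc K + t" by simp
        ultimately show False using d \<open>y^e = _\<close> by (simp add: add.commute)
      qed
      thus "q^Suc K dvd e" using f by (auto simp: mult.commute)
    qed
  qed
  show ?thesis
  proof (rule that)
    fix K s s' :: nat
    assume ss: "s < s'" and md: "(2::nat)^s mod q^(K+t) = 2^s' mod q^(K+t)"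
    define e where "e = s' - s"
    have e0: "e > 0" using ss unfolding e_def by simp
    have s': "s' = s + e" using ss unfolding e_def by simp
    have "[(2::nat)^s = 2^s'] (mod q^(K+t))" using md by (simp add: unique_euclidean_semiring_class.cong_def)
    hence "[int (2^s) = int (2^s')] (mod int (q^(K+t)))" by (simp only: cong_int_iff)
    hence "int q^(K+t) dvd 2^s - 2^s'" by (simp add: cong_iff_dvd_diff)
    hence "int q^(K+t) dvd 2^s' - 2^s" by (simp add: dvd_diff_commute)
    also have "(2::int)^s' - 2^s = 2^s * (2^e - 1)" unfolding s' by (simp add: power_add algebra_simps)
    finally have d1: "int q^(K+t) dvd 2^s * (2^e - 1)" .
    have "coprime (int q) 2"
    proof -
      have "coprime q 2" using q by (simp add: coprime_commute prime_imp_coprime_nat \<open>\<not> q dvd 2\<close>)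
      thus ?thesis by (metis of_nat_numeral coprime_int_iff)
    qed
    hence "coprime (int q^(K+t)) (2^s)" by simp
    hence d2: "int q^(K+t) dvd 2^e - 1" using d1 coprime_dvd_mult_right_iff by blast
    have "(2::int)^e - 1 dvd (2^e)^(q-1) - 1"
      using power_diff_1_eq[of "(2::int)^e" "q-1"] by simp
    also have "((2::int)^e)^(q-1) = y^e" unfolding y_def by (simp add: power_mult[symmetric] mult.commute)
    finally have "int q^(K+t) dvd y^e - 1" using d2 by (rule dvd_trans[rotated])
    hence "q^K dvd e" using claim e0 by blast
    thus "q^K \<le> s' - s" using e0 unfolding e_def by (simp add: dvd_imp_le)
  qed
qed



definition Aset :: "nat \<Rightarrow> nat \<Rightarrow> nat \<Rightarrow> nat set" where
  "Aset q K r = {i\<in>{1..K}. q^i \<le> 2*(r mod q^i)}"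

definition Sset :: "nat \<Rightarrow> nat \<Rightarrow> nat \<Rightarrow> nat set" where
  "Sset q K j = {r. r < q^K \<and> card (Aset q K r) < j}"

lemma Aset_mod: "Aset q K (r mod q^K) = Aset q K r"
  unfolding Aset_def by (auto simp: mod_mod_cancel le_imp_power_dvd)

lemma Aset_Suc: "Aset q (Suc K) r = Aset q K r \<union> (if q^Suc K \<le> 2*(r mod q^Suc K) then {Suc K} else {})"
  unfolding Aset_def by (auto simp: le_Suc_eq)

lemma Aset_finite: "finite (Aset q K r)" unfolding Aset_def by simp

lemma card_Aset_Suc_ge: "card (Aset q K r) \<le> card (Aset q (Suc K) r)"
  by (rule card_mono[OF Aset_finite]) (simp add: Aset_Suc)

lemma Sset_finite: "finite (Sset q K j)"
  by (rule finite_subset[of _ "{..<q^K}"]) (auto simp: Sset_def)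

lemma Sset_sub:
  assumes "odd q" "q \<ge> 3"
  shows "Sset q (Suc K) j \<subseteq> (\<lambda>(d,r). d*q^K + r) ` (({0..<(q+1) div 2} \<times> Sset q K j) \<union> ({(q+1) div 2..<q} \<times> Sset q K (j-1)))"
proof
  fix r assume r: "r \<in> Sset q (Suc K) j"
  define h where "h = (q+1) div 2"
  have h2: "2*h = q+1" unfolding h_def using assms(1) by simp
  define d where "d = r div q^K"
  define r' where "r' = r mod q^K"
  have qK: "q^K > 0" using assms by simp
  have rr: "r = d*q^K + r'" unfolding d_def r'_def using div_mult_mod_eq[of r "q^K"] by linarith
  have rlt: "r < q^Suc K" and cr: "card (Aset q (Suc K) r) < j" using r by (auto simp: Sset_def)
  have dq: "d < q" unfolding d_def using less_mult_imp_div_less[of r q "q^K"] rlt by simp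
  have r'lt: "r' < q^K" unfolding r'_def using qK by simp
  have A': "Aset q K r' = Aset q K r" unfolding r'_def by (rule Aset_mod)
  have r'S: "r' \<in> Sset q K j" using r'lt A' card_Aset_Suc_ge[of q K r] cr by (auto simp: Sset_def)
  show "r \<in> (\<lambda>(d,r). d*q^K + r) ` (({0..<h} \<times> Sset q K j) \<union> ({h..<q} \<times> Sset q K (j-1)))"
  proof (cases "d < h")
    case True
    thus ?thesis using rr r'S by (auto intro!: image_eqI[of _ _ "(d, r')"])
  next
    case False
    have "q^Suc K = q * q^K" by simp
    also have "\<dots> \<le> 2*h * q^K" using h2 by simp
    also have "\<dots> \<le> 2*d*q^K" using False by simp
    also have "\<dots> \<le> 2*r" using rr by simp
    finally have big: "q^Suc K \<le> 2 * (r mod q^Suc K)" using rlt by simp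
    have nin: "Suc K \<notin> Aset q K r" by (simp add: Aset_def)
    have "card (Aset q (Suc K) r) = Suc (card (Aset q K r))"
      using big nin by (simp add: Aset_Suc Aset_finite)
    hence "card (Aset q K r') < j - 1" using cr A' by simp
    hence "r' \<in> Sset q K (j-1)" using r'lt by (simp add: Sset_def)
    thus ?thesis using rr dq False by (auto intro!: image_eqI[of _ _ "(d, r')"])
  qed
qed

lemma Sset_card_rec:
  assumes "odd q" "q \<ge> 3"
  shows "card (Sset q (Suc K) j) \<le> ((q+1) div 2) * card (Sset q K j) + (q - (q+1) div 2) * card (Sset q K (j-1))"
proof -
  let ?D = "({0..<(q+1) div 2} \<times> Sset q K j) \<union> ({(q+1) div 2..<q} \<times> Sset q K (j-1))"
  have "card (Sset q (Suc K) j) \<le> card ((\<lambda>(d,r). d*q^K + r) ` ?D)"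
    by (rule card_mono[OF _ Sset_sub[OF assms]]) (simp add: Sset_finite)
  also have "\<dots> \<le> card ?D" by (rule card_image_le) (simp add: Sset_finite)
  also have "\<dots> \<le> card ({0..<(q+1) div 2} \<times> Sset q K j) + card ({(q+1) div 2..<q} \<times> Sset q K (j-1))"
    by (rule card_Un_le)
  also have "\<dots> = ((q+1) div 2) * card (Sset q K j) + (q - (q+1) div 2) * card (Sset q K (j-1))"
    by (simp add: card_cartesian_product)
  finally show ?thesis .
qed

lemma Sset_card_bound:
  assumes "odd q" "q \<ge> 3"
  shows "real (card (Sset q K j)) \<le> (2*real K+1)^j * ((real q+1)/2)^K"
proof (induction K arbitrary: j)
  case 0
  have "Sset q 0 j \<subseteq> {0}" by (auto simp: Sset_def)
  hence "card (Sset q 0 j) \<le> 1" using card_mono[of "{0::nat}"] by fastforce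
  thus ?case by simp
next
  case (Suc K)
  let ?hr = "(real q+1)/2"
  show ?case
  proof (cases j)
    case 0
    hence "Sset q (Suc K) j = {}" by (auto simp: Sset_def)
    thus ?thesis by simp
  next
    case (Suc j')
    have h: "real ((q+1) div 2) = ?hr"
    proof -
      obtain k where k: "q = 2*k+1" using assms(1) oddE by blast
      have "(q+1) div 2 = k+1" unfolding k by simp
      thus ?thesis unfolding k by simp
    qed
    have h': "real (q - (q+1) div 2) \<le> 2 * ?hr"
    proof -
      have "q - (q+1) div 2 \<le> q" by simp
      thus ?thesis by simp
    qed
    have "card (Sset q (Suc K) j) \<le> ((q+1) div 2) * card (Sset q K j) + (q - (q+1) div 2) * card (Sset q K j')"
      using Sset_card_rec[OF assms, of K j] Suc by simp
    hence "real (card (Sset q (Suc K) j)) \<le> real (((q+1) div 2) * card (Sset q K j) + (q - (q+1) div 2) * card (Sset q K j'))"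
      by (rule of_nat_mono)
    also have "\<dots> = real ((q+1) div 2) * card (Sset q K j) + real (q - (q+1) div 2) * card (Sset q K j')"
      by (simp only: of_nat_add of_nat_mult)
    also have "\<dots> \<le> ?hr * ((2*real K+1)^j * ?hr^K) + (2*?hr) * ((2*real K+1)^j' * ?hr^K)"
      using Suc.IH[of j] Suc.IH[of j'] h h' by (intro add_mono mult_mono) auto
    also have "\<dots> = ?hr^Suc K * ((2*real K+1)^j' * (2*real K + 3))"
      using Suc by (simp add: field_simps)
    also have "\<dots> \<le> ?hr^Suc K * ((2*real (Suc K)+1)^j)"
    proof (rule mult_left_mono)
      have "(2*real K+1)^j' \<le> (2*real (Suc K)+1)^j'" by (intro power_mono) auto
      hence "(2*real K+1)^j' * (2*real K + 3) \<le> (2*real (Suc K)+1)^j' * (2*real (Suc K) + 1)"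
        by (intro mult_mono) auto
      thus "(2*real K+1)^j' * (2*real K + 3) \<le> (2*real (Suc K)+1)^j" using Suc by (simp add: algebra_simps)
    qed simp
    finally show ?thesis by (simp add: mult.commute)
  qed
qed



lemma H_nonneg:
  fixes x :: real assumes x: "x \<ge> 3"
  shows "(x+1) * ln ((x+1)/2) \<le> x * ln x"
proof -
  define f where "f y = y * ln y - (y+1) * ln ((y+1)/2)" for y :: real
  have "f 3 \<le> f x"
  proof (rule DERIV_nonneg_imp_nondecreasing[OF x])
    fix y :: real assume y1: "3 \<le> y" and y2: "y \<le> x"
    note y = y1 y2
    have "DERIV f y :> ln y - ln ((y+1)/2)"
      unfolding f_def using y by (auto intro!: derivative_eq_intros simp: field_simps)
    moreover have "ln ((y+1)/2) \<le> ln y" using y by simp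
    ultimately show "\<exists>d. DERIV f y :> d \<and> 0 \<le> d" by auto
  qed
  moreover have "f 3 \<ge> 0"
  proof -
    have l: "ln (16::real) \<le> ln 27" by (subst ln_le_cancel_iff) auto
    have a1: "ln (16::real) = 4 * ln 2" using ln_realpow[of 2 4] by simp
    have a2: "ln (27::real) = 3 * ln 3" using ln_realpow[of 3 3] by simp
    have "4 * ln 2 \<le> 3 * ln (3::real)" using l a1 a2 by simp
    thus ?thesis unfolding f_def by simp
  qed
  ultimately show ?thesis unfolding f_def by simp
qed

lemma G_mono:
  fixes a b :: real assumes a: "3 \<le> a" "a \<le> b"
  shows "ln ((a+1)/2) / ln a \<le> ln ((b+1)/2) / ln b"
proof (rule DERIV_nonneg_imp_nondecreasing[OF a(2)])
  fix y :: real assume y1: "a \<le> y" and y2: "y \<le> b"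
  note y = y1 y2
  hence y3: "y \<ge> 3" using a by simp
  have lp: "ln y > 0" using y3 by simp
  have "DERIV (\<lambda>y. ln ((y+1)/2) / ln y) y :> (ln y / (y+1) - ln ((y+1)/2) / y) / (ln y)^2"
    using y3 by (auto intro!: derivative_eq_intros simp: field_simps power2_eq_square)
  moreover have "0 \<le> (ln y / (y+1) - ln ((y+1)/2) / y) / (ln y)^2"
  proof -
    have "(y+1) * ln ((y+1)/2) \<le> y * ln y" by (rule H_nonneg[OF y3])
    hence "ln ((y+1)/2) / y \<le> ln y / (y+1)" using y3 by (simp add: field_simps)
    thus ?thesis by simp
  qed
  ultimately show "\<exists>d. DERIV (\<lambda>y. ln ((y+1)/2) / ln y) y :> d \<and> 0 \<le> d" by auto
qed



lemma notdvd_card: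
  assumes q: "prime (q::nat)" and nd: "\<not> q^j dvd ((2*n) choose n)"
  shows "card (Aset q K n) < j"
proof -
  have nu: "\<not> is_unit q" using prime_ge_2_nat[OF q] by simp
  have nz: "((2*n) choose n) \<noteq> 0" by simp
  have lt: "multiplicity q ((2*n) choose n) < j"
    using nd power_dvd_iff_le_multiplicity[OF nz nu, of j] by simp
  have sub: "Aset q K n \<subseteq> {i\<in>{1..2*n}. q^i \<le> 2*(n mod q^i)}"
  proof
    fix i assume i: "i \<in> Aset q K n"
    hence i1: "i \<ge> 1" and ic: "q^i \<le> 2*(n mod q^i)" by (auto simp: Aset_def)
    have "i \<le> 2*n"
    proof (rule ccontr)
      assume "\<not> i \<le> 2*n"
      hence "2*n < q^i" using pow_gt[OF q, of i] by simp
      hence "n < q^i" by simp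
      hence "n mod q^i = n" by simp
      thus False using ic \<open>2*n < q^i\<close> by simp
    qed
    thus "i \<in> {i\<in>{1..2*n}. q^i \<le> 2*(n mod q^i)}" using i1 ic by simp
  qed
  have "card (Aset q K n) \<le> card {i\<in>{1..2*n}. q^i \<le> 2*(n mod q^i)}"
    by (rule card_mono[OF _ sub]) simp
  also have "\<dots> = multiplicity q ((2*n) choose n)" using binom_mult[OF q] by simp
  finally show ?thesis using lt by simp
qed

lemma count_bound:
  assumes q: "prime (q::nat)" "odd q"
  obtains T where "\<And>a K. a \<le> q^K \<Longrightarrow>
     real (card {s. s < a \<and> \<not> q^j dvd ((2^(s+1)) choose (2^s))}) \<le> (2*real (K+T)+1)^j * ((real q+1)/2)^(K+T)"
proof -
  have q3: "q \<ge> 3" using q prime_ge_2_nat[OF q(1)] by presburger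
  obtain T where T: "\<And>K s s'. s < s' \<Longrightarrow> (2::nat)^s mod q^(K+T) = 2^s' mod q^(K+T) \<Longrightarrow> q^K \<le> s' - s"
    using order_lb[OF q] by blast
  show ?thesis
  proof (rule that)
    fix a K :: nat assume aK: "a \<le> q^K"
    let ?X = "{s. s < a \<and> \<not> q^j dvd ((2^(s+1)) choose (2^s))}"
    let ?phi = "\<lambda>s::nat. (2::nat)^s mod q^(K+T)"
    have inj: "inj_on ?phi ?X"
    proof (rule inj_onI)
      fix s s' assume s: "s \<in> ?X" and s': "s' \<in> ?X" and eq: "?phi s = ?phi s'"
      show "s = s'"
      proof (rule ccontr)
        assume "s \<noteq> s'"
        hence "s < s' \<or> s' < s" by auto
        thus False
        proof
          assume "s < s'"
          hence "q^K \<le> s' - s" using T eq by blast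
          thus False using s' aK by auto
        next
          assume "s' < s"
          hence "q^K \<le> s - s'" using T eq by metis
          thus False using s aK by auto
        qed
      qed
    qed
    have into: "?phi ` ?X \<subseteq> Sset q (K+T) j"
    proof
      fix r assume "r \<in> ?phi ` ?X"
      then obtain s where s: "s \<in> ?X" and r: "r = ?phi s" by blast
      have "\<not> q^j dvd ((2*2^s) choose (2^s))" using s by simp
      hence "card (Aset q (K+T) (2^s)) < j" by (rule notdvd_card[OF q(1)])
      hence "card (Aset q (K+T) r) < j" unfolding r by (simp add: Aset_mod)
      moreover have "r < q^(K+T)" unfolding r using q3 by simp
      ultimately show "r \<in> Sset q (K+T) j" by (simp add: Sset_def)
    qed
    have "card ?X = card (?phi ` ?X)" using inj by (simp add: card_image)
    also have "\<dots> \<le> card (Sset q (K+T) j)" by (rule card_mono[OF Sset_finite into])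
    finally have "real (card ?X) \<le> real (card (Sset q (K+T) j))" by simp
    also have "\<dots> \<le> (2*real (K+T)+1)^j * ((real q+1)/2)^(K+T)"
      using Sset_card_bound[of q "K+T" j] q q3 by simp
    finally show "real (card ?X) \<le> (2*real (K+T)+1)^j * ((real q+1)/2)^(K+T)" .
  qed
qed

lemma asym:
  fixes c c' b d :: real and q :: nat
  assumes "d > 0" "q > 1"
  shows "(\<lambda>a::nat. c * (2*log q (real a) + c')^j * real a powr b) \<in> o(\<lambda>a. real a powr (b+d))"
proof -
  have "(\<lambda>a::nat. c * (2*log q (real a) + c')^j * real a powr b) \<in> o(\<lambda>a. real a powr b * real a powr d)"
    using assms by real_asymp
  thus ?thesis by (simp add: powr_add)
qed

lemma powr_log_swap:
  fixes h a q :: real assumes "h > 0" "a > 0" "q > 1"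
  shows "h powr log q a = a powr log q h"
  using assms by (simp add: powr_def log_def)

lemma cnt_smallo:
  assumes q: "prime (q::nat)" "odd q" and ba: "log q ((real q+1)/2) \<le> \<alpha>" and e: "\<epsilon> > 0"
  shows "(\<lambda>a. real (card {s. s < a \<and> \<not> q^j dvd ((2^(s+1)) choose (2^s))})) \<in> o(\<lambda>a. real a powr (\<alpha>+\<epsilon>))"
proof -
  have q3: "q \<ge> 3" using q prime_ge_2_nat[OF q(1)] by presburger
  obtain T where T: "\<And>a K. a \<le> q^K \<Longrightarrow>
     real (card {s. s < a \<and> \<not> q^j dvd ((2^(s+1)) choose (2^s))}) \<le> (2*real (K+T)+1)^j * ((real q+1)/2)^(K+T)"
    using count_bound[OF q] by blast
  define hr where "hr = (real q+1)/2"
  define \<beta> where "\<beta> = log q hr"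
  have hr2: "hr \<ge> 2" unfolding hr_def using q3 by simp
  define B where "B a = hr^(T+1) * (2*log q (real a) + (2*real T+3))^j * real a powr \<beta>" for a :: nat
  have bound: "real (card {s. s < a \<and> \<not> q^j dvd ((2^(s+1)) choose (2^s))}) \<le> B a" if a1: "a \<ge> 1" for a :: nat
  proof -
    define K where "K = nat \<lceil>log q (real a)\<rceil>"
    have lg0: "log q (real a) \<ge> 0" using a1 q3 by simp
    have rK: "real K = of_int \<lceil>log q (real a)\<rceil>" unfolding K_def using lg0 by simp
    have "real a = real q powr log q (real a)" using a1 q3 by simp
    also have "\<dots> \<le> real q powr real K" unfolding rK using q3 by (intro powr_mono) auto
    also have "\<dots> = real (q^K)" using q3 by (simp add: powr_realpow)
    finally have aK: "a \<le> q^K" by linarith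
    have K1: "real K \<le> log q (real a) + 1" unfolding rK by linarith
    have "real (card {s. s < a \<and> \<not> q^j dvd ((2^(s+1)) choose (2^s))}) \<le> (2*real (K+T)+1)^j * hr^(K+T)"
      using T[OF aK] unfolding hr_def .
    also have "\<dots> \<le> (2*log q (real a) + (2*real T+3))^j * (hr^T * (hr * real a powr \<beta>))"
    proof (intro mult_mono power_mono)
      show "2*real (K+T)+1 \<le> 2*log q (real a) + (2*real T+3)" using K1 by simp
      have "hr^K = hr powr real K" using hr2 by (simp add: powr_realpow)
      also have "\<dots> \<le> hr powr (log q (real a) + 1)" using hr2 K1 by (intro powr_mono) auto
      also have "\<dots> = hr * real a powr \<beta>" unfolding \<beta>_def using hr2 a1 q3
        by (simp add: powr_add powr_log_swap)
      finally have "hr^K \<le> hr * real a powr \<beta>" .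
      thus "hr^(K+T) \<le> hr^T * (hr * real a powr \<beta>)" using hr2 by (simp add: power_add mult.commute)
    qed (use hr2 lg0 in auto)
    also have "\<dots> = B a" unfolding B_def by (simp add: algebra_simps)
    finally show ?thesis .
  qed
  have big: "(\<lambda>a. real (card {s. s < a \<and> \<not> q^j dvd ((2^(s+1)) choose (2^s))})) \<in> O(B)"
  proof (rule bigoI[of _ 1])
    show "\<forall>\<^sub>F a in at_top. norm (real (card {s. s < a \<and> \<not> q^j dvd ((2^(s+1)) choose (2^s))})) \<le> 1 * norm (B a)"
      using eventually_ge_at_top[of "1::nat"]
    proof eventually_elim
      case (elim a)
      thus ?case using bound[OF elim] by simp
    qed
  qed
  have "B \<in> o(\<lambda>a. real a powr (\<beta> + (\<alpha> + \<epsilon> - \<beta>)))"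
    unfolding B_def using q3 e ba unfolding \<beta>_def hr_def by (intro asym) auto
  hence "B \<in> o(\<lambda>a. real a powr (\<alpha> + \<epsilon>))" by simp
  with big show ?thesis by (rule landau_o.big_small_trans)
qed

theorem theorem3p2:
  fixes m :: nat and p :: nat and \<epsilon> :: real
  assumes "odd m" and "m > 1"
    and "p = Max (prime_factors m)"
    and "\<epsilon> > 0"
  shows "(\<lambda>a. real (C m a)) \<in> o(\<lambda>a. real a powr (log (real p) ((real p + 1) / 2) + \<epsilon>))"
proof -
  define P where "P = prime_factors m"
  define \<alpha> where "\<alpha> = log (real p) ((real p + 1) / 2)"
  define b where "b s = ((2::nat)^(s+1)) choose (2^s)" for s :: nat
  define cnt where "cnt q a = real (card {s. s < a \<and> \<not> q^(multiplicity q m) dvd b s})" for q a :: nat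
  have m0: "m \<noteq> 0" using assms(2) by simp
  have fin: "finite P" unfolding P_def by simp
  obtain r where r: "prime r" "r dvd m" using prime_factor_nat[of m] assms(2) by auto
  have "r \<in> P" using r m0 unfolding P_def by (simp add: in_prime_factors_iff)
  hence ne: "P \<noteq> {}" by blast
  have pP: "p \<in> P" unfolding assms(3) P_def[symmetric] using fin ne by (rule Max_in)
  have qprops: "prime q \<and> odd q \<and> 3 \<le> q \<and> q \<le> p" if "q \<in> P" for q
  proof -
    have pq: "prime q" "q dvd m" using that unfolding P_def by (auto simp: in_prime_factors_iff)
    have "odd q" using pq(2) assms(1) by (auto dest: dvd_trans[of 2 q m])
    moreover have "q \<ge> 3" using \<open>odd q\<close> prime_ge_2_nat[OF pq(1)] by presburger
    moreover have "q \<le> p" unfolding assms(3) P_def[symmetric] using fin that by (rule Max_ge)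
    ultimately show ?thesis using pq by simp
  qed
  have each: "(cnt q) \<in> o(\<lambda>a. real a powr (\<alpha> + \<epsilon>))" if qP: "q \<in> P" for q
  proof -
    have qp: "prime q" "odd q" "3 \<le> q" "q \<le> p" using qprops[OF qP] by auto
    have p3: "3 \<le> p" using qprops[OF pP] by auto
    have "ln ((real q+1)/2) / ln (real q) \<le> ln ((real p+1)/2) / ln (real p)"
      using qp p3 by (intro G_mono) auto
    hence "log q ((real q+1)/2) \<le> \<alpha>" unfolding \<alpha>_def by (simp add: log_def)
    thus ?thesis unfolding cnt_def b_def using cnt_smallo[OF qp(1,2) _ assms(4)] by blast
  qed
  have sum: "(\<lambda>a. \<Sum>q\<in>P. cnt q a) \<in> o(\<lambda>a. real a powr (\<alpha> + \<epsilon>))"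
    using each by (rule big_sum_in_smallo)
  have le: "real (C m a) \<le> (\<Sum>q\<in>P. cnt q a)" for a
  proof -
    have sub: "{s. s < a \<and> \<not> m dvd b s} \<subseteq> (\<Union>q\<in>P. {s. s < a \<and> \<not> q^(multiplicity q m) dvd b s})"
    proof
      fix s assume s: "s \<in> {s. s < a \<and> \<not> m dvd b s}"
      show "s \<in> (\<Union>q\<in>P. {s. s < a \<and> \<not> q^(multiplicity q m) dvd b s})"
      proof (rule ccontr)
        assume "\<not> ?thesis"
        hence all: "\<forall>q\<in>P. q^(multiplicity q m) dvd b s" using s by auto
        have bnz: "b s \<noteq> 0" unfolding b_def by simp
        have "m dvd b s"
        proof (rule multiplicity_le_imp_dvd[OF m0])
          fix r :: nat assume r: "prime r"
          show "multiplicity r m \<le> multiplicity r (b s)"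
          proof (cases "r \<in> P")
            case True
            have nu: "\<not> is_unit r" using prime_ge_2_nat[OF r] by simp
            show ?thesis using all True power_dvd_iff_le_multiplicity[OF bnz nu] by blast
          next
            case False
            hence "\<not> r dvd m" using r m0 unfolding P_def by (auto simp: in_prime_factors_iff)
            thus ?thesis by (simp add: not_dvd_imp_multiplicity_0)
          qed
        qed
        thus False using s by simp
      qed
    qed
    have "C m a = card {s. s < a \<and> \<not> m dvd b s}" unfolding C_def b_def by simp
    also have "\<dots> \<le> card (\<Union>q\<in>P. {s. s < a \<and> \<not> q^(multiplicity q m) dvd b s})"
      by (rule card_mono[OF _ sub]) (use fin in auto)
    also have "\<dots> \<le> (\<Sum>q\<in>P. card {s. s < a \<and> \<not> q^(multiplicity q m) dvd b s})"
      by (rule card_UN_le[OF fin])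
    finally show ?thesis unfolding cnt_def by (simp flip: of_nat_sum)
  qed
  have "(\<lambda>a. real (C m a)) \<in> O(\<lambda>a. \<Sum>q\<in>P. cnt q a)"
  proof (rule bigoI[of _ 1])
    show "\<forall>\<^sub>F a in at_top. norm (real (C m a)) \<le> 1 * norm (\<Sum>q\<in>P. cnt q a)"
      using le by (auto intro!: always_eventually order_trans[OF _ abs_ge_self])
  qed
  from this sum have "(\<lambda>a. real (C m a)) \<in> o(\<lambda>a. real a powr (\<alpha> + \<epsilon>))" by (rule landau_o.big_small_trans)
  thus ?thesis unfolding \<alpha>_def .
qed


end
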